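(* Let $(\Gamma,\psi)$ be an $H$-asymptotic couple with asymptotic integration and let $\gamma\in(\Gamma^{>})'$. Then $\int\gamma>-\int s(\gamma)=-\chi(\int\gamma)>0$. Furthermore, if $\gamma_0,\gamma_1\in(\Gamma^{>})'$ and $\gamma_0\le\gamma_1$, then $-\int s(\gamma_0)\le-\int s(\gamma_1)$.
   Context: An asymptotic couple is a pair $(\Gamma,\psi)$ with $\Gamma$ an ordered abelian group and $\psi:\Gamma\setminus\{0\}\to\Gamma$ such that for all nonzero $\alpha,\beta$: $\alpha+\beta\ne0\Rightarrow\psi(\alpha+\beta)\ge\min(\psi(\alpha),\psi(\beta))$; $\psi(k\alpha)=\psi(\alpha)$ for $k\in\mathbb{Z}\setminus\{0\}$; $\alpha>0\Rightarrow\alpha+\psi(\alpha)>\psi(\beta)$. $H$-asymptotic: $0<\alpha\le\beta\Rightarrow\psi(\alpha)\ge\psi(\beta)$. Write $\gamma'=\gamma+\psi(\gamma)$ for $\gamma\ne0$, $(\Gamma^{>})'=\{\gamma':\gamma>0\}$. Asymptotic integration: every $\alpha\in\Gamma$ equals $\gamma'$ for a (necessarily unique) $\gamma\ne0$, denoted $\int\alpha$. Successor function $s(\alpha)=\psi(\int\alpha)$; contraction map $\chi(\alpha)=\int\psi(\alpha)$ for $\alpha\ne0$, $\chi(0)=0$. *)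

theory Defs
  imports Main
begin

text \<open>An asymptotic couple (Gamma, psi): Gamma is the ordered abelian group given by the
type 'a; psi is a function on Gamma whose value at 0 is irrelevant (psi is only
defined on Gamma without 0 in the paper).\<close>

definition zmult :: "int \<Rightarrow> 'a::ab_group_add \<Rightarrow> 'a" where
  "zmult k \<alpha> = (if k \<ge> 0 then (\<Sum>i<nat k. \<alpha>) else - (\<Sum>i<nat (- k). \<alpha>))"

definition asymptotic_couple :: "('a::linordered_ab_group_add \<Rightarrow> 'a) \<Rightarrow> bool" where
  "asymptotic_couple psi \<longleftrightarrow>
     (\<forall>\<alpha> \<beta>. \<alpha> \<noteq> 0 \<longrightarrow> \<beta> \<noteq> 0 \<longrightarrow> \<alpha> + \<beta> \<noteq> 0 \<longrightarrow> psi (\<alpha> + \<beta>) \<ge> min (psi \<alpha>) (psi \<beta>)) \<and>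
     (\<forall>\<alpha> (k::int). \<alpha> \<noteq> 0 \<longrightarrow> k \<noteq> 0 \<longrightarrow> psi (zmult k \<alpha>) = psi \<alpha>) \<and>
     (\<forall>\<alpha> \<beta>. \<alpha> > 0 \<longrightarrow> \<beta> \<noteq> 0 \<longrightarrow> \<alpha> + psi \<alpha> > psi \<beta>)"

definition H_asymptotic :: "('a::linordered_ab_group_add \<Rightarrow> 'a) \<Rightarrow> bool" where
  "H_asymptotic psi \<longleftrightarrow> (\<forall>\<alpha> \<beta>. 0 < \<alpha> \<longrightarrow> \<alpha> \<le> \<beta> \<longrightarrow> psi \<alpha> \<ge> psi \<beta>)"

definition deriv_ac :: "('a::linordered_ab_group_add \<Rightarrow> 'a) \<Rightarrow> 'a \<Rightarrow> 'a" where
  "deriv_ac psi \<gamma> = \<gamma> + psi \<gamma>"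

definition pos_derivs :: "('a::linordered_ab_group_add \<Rightarrow> 'a) \<Rightarrow> 'a set" where
  "pos_derivs psi = {deriv_ac psi \<gamma> | \<gamma>. \<gamma> > 0}"

definition has_asymptotic_integration :: "('a::linordered_ab_group_add \<Rightarrow> 'a) \<Rightarrow> bool" where
  "has_asymptotic_integration psi \<longleftrightarrow> (\<forall>\<alpha>. \<exists>\<gamma>. \<gamma> \<noteq> 0 \<and> deriv_ac psi \<gamma> = \<alpha>)"

definition integ :: "('a::linordered_ab_group_add \<Rightarrow> 'a) \<Rightarrow> 'a \<Rightarrow> 'a" where
  "integ psi \<alpha> = (THE \<gamma>. \<gamma> \<noteq> 0 \<and> deriv_ac psi \<gamma> = \<alpha>)"

definition succ_ac :: "('a::linordered_ab_group_add \<Rightarrow> 'a) \<Rightarrow> 'a \<Rightarrow> 'a" where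
  "succ_ac psi \<alpha> = psi (integ psi \<alpha>)"

definition contr_ac :: "('a::linordered_ab_group_add \<Rightarrow> 'a) \<Rightarrow> 'a \<Rightarrow> 'a" where
  "contr_ac psi \<alpha> = (if \<alpha> = 0 then 0 else integ psi (psi \<alpha>))"

end

theory Submission
  imports Defs
begin

lemma psi_neg:
  fixes psi :: "'a::linordered_ab_group_add \<Rightarrow> 'a"
  assumes "asymptotic_couple psi" "\<alpha> \<noteq> 0"
  shows "psi (- \<alpha>) = psi \<alpha>"
proof -
  have "zmult (-1) \<alpha> = - \<alpha>" by (simp add: zmult_def)
  with assms show ?thesis unfolding asymptotic_couple_def by (metis neg_equal_0_iff_equal zero_neq_neg_one)
qed

lemma deriv_mono:
  fixes psi :: "'a::linordered_ab_group_add \<Rightarrow> 'a"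
  assumes ac: "asymptotic_couple psi" and H: "H_asymptotic psi"
    and "\<alpha> \<noteq> 0" "\<beta> \<noteq> 0" "\<alpha> < \<beta>"
  shows "deriv_ac psi \<alpha> < deriv_ac psi \<beta>"
proof -
  have A3: "\<And>a b. a > 0 \<Longrightarrow> b \<noteq> 0 \<Longrightarrow> a + psi a > psi b" using ac unfolding asymptotic_couple_def by blast
  have A1: "\<And>a b. a \<noteq> 0 \<Longrightarrow> b \<noteq> 0 \<Longrightarrow> a + b \<noteq> 0 \<Longrightarrow> psi (a + b) \<ge> min (psi a) (psi b)"
    using ac unfolding asymptotic_couple_def by blast
  have HH: "\<And>a b. 0 < a \<Longrightarrow> a \<le> b \<Longrightarrow> psi a \<ge> psi b" using H unfolding H_asymptotic_def by blast
  show ?thesis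
  proof (cases "\<alpha> > 0")
    case True
    define d where "d = \<beta> - \<alpha>"
    have d: "d > 0" using assms d_def by simp
    have b: "\<beta> = \<alpha> + d" using d_def by simp
    have "psi \<alpha> \<ge> psi \<beta>" using HH True assms by simp
    have m: "psi \<beta> \<ge> min (psi \<alpha>) (psi d)" using A1[of \<alpha> d] b d True assms by auto
    have "d + psi d > psi \<alpha>" using A3 d assms by simp
    show ?thesis
    proof (cases "psi \<beta> \<ge> psi \<alpha>")
      case True
      hence "psi \<beta> = psi \<alpha>" using \<open>psi \<alpha> \<ge> psi \<beta>\<close> by simp
      then show ?thesis unfolding deriv_ac_def using assms by simp
    next
      case False
      hence "psi d \<le> psi \<beta>" using m by (simp add: min_def split: if_splits)
      hence "psi \<alpha> < d + psi \<beta>" using \<open>d + psi d > psi \<alpha>\<close> by (meson add_left_mono less_le_trans)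
      then show ?thesis unfolding deriv_ac_def b by (simp add: add.assoc add.commute add.left_commute)
    qed
  next
    case False
    hence an: "\<alpha> < 0" using assms by simp
    show ?thesis
    proof (cases "\<beta> > 0")
      case True
      have "\<beta> + psi \<beta> > psi (-\<alpha>)" using A3 True an by simp
      moreover have "psi (-\<alpha>) = psi \<alpha>" using psi_neg ac assms by blast
      ultimately show ?thesis unfolding deriv_ac_def using an
        by (metis add_less_same_cancel2 order.strict_trans)
    next
      case False
      hence bn: "\<beta> < 0" using assms by simp
      have "psi (-\<beta>) \<ge> psi (-\<alpha>)" using HH[of "-\<beta>" "-\<alpha>"] bn assms by simp
      moreover have "psi (-\<alpha>) = psi \<alpha>" "psi (-\<beta>) = psi \<beta>" using psi_neg ac assms by blast+
      ultimately show ?thesis unfolding deriv_ac_def using assms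
        by (metis add_less_le_mono)
    qed
  qed
qed

lemma deriv_inj:
  fixes psi :: "'a::linordered_ab_group_add \<Rightarrow> 'a"
  assumes ac: "asymptotic_couple psi" and H: "H_asymptotic psi"
    and "\<alpha> \<noteq> 0" "\<beta> \<noteq> 0" "deriv_ac psi \<alpha> = deriv_ac psi \<beta>"
  shows "\<alpha> = \<beta>"
  using deriv_mono[OF ac H] assms by (metis less_irrefl linorder_neqE)

lemma integ_deriv:
  fixes psi :: "'a::linordered_ab_group_add \<Rightarrow> 'a"
  assumes ac: "asymptotic_couple psi" and H: "H_asymptotic psi" and "\<alpha> \<noteq> 0"
  shows "integ psi (deriv_ac psi \<alpha>) = \<alpha>"
  unfolding integ_def
  apply (rule the_equality)
  using assms deriv_inj[OF ac H] by auto

lemma integ_props: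
  fixes psi :: "'a::linordered_ab_group_add \<Rightarrow> 'a"
  assumes ac: "asymptotic_couple psi" and H: "H_asymptotic psi" and I: "has_asymptotic_integration psi"
  shows "integ psi \<beta> \<noteq> 0 \<and> deriv_ac psi (integ psi \<beta>) = \<beta>"
proof -
  obtain g where g: "g \<noteq> 0" "deriv_ac psi g = \<beta>" using I unfolding has_asymptotic_integration_def by blast
  then show ?thesis using integ_deriv[OF ac H g(1)] by simp
qed

theorem lemma3p13:
  fixes psi :: "'a::linordered_ab_group_add \<Rightarrow> 'a"
  assumes "asymptotic_couple psi" and "H_asymptotic psi"
    and "has_asymptotic_integration psi"
  shows "(\<forall>\<gamma> \<in> pos_derivs psi.
           integ psi \<gamma> > - integ psi (succ_ac psi \<gamma>) \<and>
           - integ psi (succ_ac psi \<gamma>) = - contr_ac psi (integ psi \<gamma>) \<and>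
           - contr_ac psi (integ psi \<gamma>) > 0) \<and>
         (\<forall>\<gamma>0 \<in> pos_derivs psi. \<forall>\<gamma>1 \<in> pos_derivs psi. \<gamma>0 \<le> \<gamma>1 \<longrightarrow>
           - integ psi (succ_ac psi \<gamma>0) \<le> - integ psi (succ_ac psi \<gamma>1))"
proof -
  note ac = assms(1) and H = assms(2) and I = assms(3)
  have A3: "\<And>a b. a > 0 \<Longrightarrow> b \<noteq> 0 \<Longrightarrow> a + psi a > psi b" using ac unfolding asymptotic_couple_def by blast
  have HH: "\<And>a b. 0 < a \<Longrightarrow> a \<le> b \<Longrightarrow> psi a \<ge> psi b" using H unfolding H_asymptotic_def by blast
  have key: "\<alpha> > - integ psi (psi \<alpha>) \<and> - integ psi (psi \<alpha>) > 0" if a: "\<alpha> > 0" for \<alpha>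
  proof -
    define d where "d = integ psi (psi \<alpha>)"
    have d: "d \<noteq> 0" "d + psi d = psi \<alpha>" using integ_props[OF ac H I, of "psi \<alpha>"] unfolding d_def deriv_ac_def by blast+
    have dn: "d < 0"
    proof (rule ccontr)
      assume "\<not> d < 0" hence "d > 0" using d by simp
      hence "d + psi d > psi \<alpha>" using A3[of d \<alpha>] a by simp
      with d show False by simp
    qed
    define e where "e = - d"
    have e: "e > 0" using dn e_def by simp
    have pe: "psi e = psi d" using psi_neg[OF ac d(1)] e_def by simp
    have "e < \<alpha>"
    proof (rule ccontr)
      assume "\<not> e < \<alpha>" hence "\<alpha> \<le> e" by simp
      hence "psi e \<le> psi \<alpha>" using HH[of \<alpha> e] a by simp
      moreover have "psi \<alpha> = psi e - e" using d pe e_def by (simp add: algebra_simps)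
      moreover have "psi e - e < psi e" using e by simp
      ultimately show False by simp
    qed
    then show ?thesis using e e_def d_def by simp
  qed
  have int_pos: "integ psi g = \<alpha>" "\<alpha> > 0" if "g \<in> pos_derivs psi" "g = deriv_ac psi \<alpha>" "\<alpha> > 0" for g \<alpha>
    using that integ_deriv[OF ac H] by auto
  show ?thesis
  proof (intro conjI ballI impI)
    fix g assume g: "g \<in> pos_derivs psi"
    then obtain \<alpha> where a: "\<alpha> > 0" "g = deriv_ac psi \<alpha>" unfolding pos_derivs_def by blast
    hence ig: "integ psi g = \<alpha>" using integ_deriv[OF ac H] by simp
    have an: "\<alpha> \<noteq> 0" using a(1) by simp
    show "- integ psi (succ_ac psi g) < integ psi g" using key[OF a(1)] ig by (simp add: succ_ac_def)
    show "- integ psi (succ_ac psi g) = - contr_ac psi (integ psi g)" using ig an by (simp add: contr_ac_def succ_ac_def)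
    show "0 < - contr_ac psi (integ psi g)" using key[OF a(1)] ig an by (simp add: contr_ac_def)
  next
    fix g0 g1 assume g: "g0 \<in> pos_derivs psi" "g1 \<in> pos_derivs psi" "g0 \<le> g1"
    then obtain a0 a1 where a: "a0 > 0" "g0 = deriv_ac psi a0" "a1 > 0" "g1 = deriv_ac psi a1"
      unfolding pos_derivs_def by blast
    have "a0 \<le> a1"
    proof (rule ccontr)
      assume "\<not> a0 \<le> a1" hence "a1 < a0" by simp
      hence "g1 < g0" using deriv_mono[OF ac H, of a1 a0] a by simp
      with g show False by simp
    qed
    hence p: "psi a1 \<le> psi a0" using HH[of a0 a1] a by simp
    define d0 where "d0 = integ psi (psi a0)"
    define d1 where "d1 = integ psi (psi a1)"
    have d: "d0 \<noteq> 0" "deriv_ac psi d0 = psi a0" "d1 \<noteq> 0" "deriv_ac psi d1 = psi a1"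
      using integ_props[OF ac H I] d0_def d1_def by auto
    have "d1 \<le> d0"
    proof (rule ccontr)
      assume "\<not> d1 \<le> d0" hence "d0 < d1" by simp
      hence "psi a0 < psi a1" using deriv_mono[OF ac H, of d0 d1] d by simp
      with p show False by simp
    qed
    moreover have "integ psi g0 = a0" "integ psi g1 = a1" using a integ_deriv[OF ac H] by auto
    ultimately show "- integ psi (succ_ac psi g0) \<le> - integ psi (succ_ac psi g1)"
      unfolding succ_ac_def by (simp add: d0_def[symmetric] d1_def[symmetric])
  qed
qed

end
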